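(* Let $X$ be a countably infinite set and let $M_{2^{\aleph_0}}$ be the lattice consisting of an antichain of cardinality $2^{\aleph_0}$ together with a smallest and a largest element. Then there exists an injective order-preserving map $M_{2^{\aleph_0}}\to\mathrm{Cl}_{loc}(X)$ which preserves (binary) joins, and there exists an injective order-preserving map $M_{2^{\aleph_0}}\to\mathrm{Cl}_{loc}(X)$ which preserves (binary) meets.
   Context: A clone on $X$ is a set of finitary operations $X^n\to X$ ($n\ge1$) containing all projections $\pi^n_k(x_1,\dots,x_n)=x_k$ and closed under composition. Giving $X$ the discrete topology and $X^{X^n}$ the product topology, a clone is local if for each $n$ its set of $n$-ary operations is closed in $X^{X^n}$; equivalently, an $n$-ary operation $g$ belongs to the clone whenever for every finite $B\subseteq X^n$ some $n$-ary operation of the clone agrees with $g$ on $B$. $\mathrm{Cl}_{loc}(X)$ is the complete lattice of local clones on $X$ ordered by inclusion (meet is intersection, join is the smallest local clone containing the union). *)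

theory Defs
  imports "HOL-Library.Countable_Set"
begin

text \<open>An n-ary operation on the ground set (the universe of type 'a) is encoded as a pair
 (n, f) with n >= 1 and f :: (nat => 'a) => 'a depending only on the first n coordinates
 of its argument.  This encoding is canonical: every map X^n -> X has exactly one code.\<close>

type_synonym 'a op = "nat \<times> ((nat \<Rightarrow> 'a) \<Rightarrow> 'a)"

definition wf_op :: "'a op \<Rightarrow> bool" where
  "wf_op o' \<longleftrightarrow> fst o' \<ge> 1 \<and>
     (\<forall>x y. (\<forall>i<fst o'. x i = y i) \<longrightarrow> snd o' x = snd o' y)"

definition is_clone :: "'a op set \<Rightarrow> bool" where
  "is_clone C \<longleftrightarrow>
     (\<forall>o'\<in>C. wf_op o') \<and>
     (\<forall>n k. 1 \<le> n \<longrightarrow> k < n \<longrightarrow> (n, \<lambda>x. x k) \<in> C) \<and>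
     (\<forall>n f m gs. (n, f) \<in> C \<longrightarrow> 1 \<le> m \<longrightarrow> (\<forall>i<n. (m, gs i) \<in> C) \<longrightarrow>
        (m, \<lambda>x. f (\<lambda>i. gs i x)) \<in> C)"

definition is_local_clone :: "'a op set \<Rightarrow> bool" where
  "is_local_clone C \<longleftrightarrow> is_clone C \<and>
     (\<forall>n g. wf_op (n, g) \<longrightarrow>
        (\<forall>B. finite B \<longrightarrow> (\<exists>h. (n, h) \<in> C \<and> (\<forall>x\<in>B. h x = g x))) \<longrightarrow>
        (n, g) \<in> C)"

definition loc_join :: "'a op set \<Rightarrow> 'a op set \<Rightarrow> 'a op set" where
  "loc_join C D = \<Inter>{E. is_local_clone E \<and> C \<union> D \<subseteq> E}"

definition loc_meet :: "'a op set \<Rightarrow> 'a op set \<Rightarrow> 'a op set" where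
  "loc_meet C D = C \<inter> D"

datatype 'i mlat = MBot | MTop | MAt 'i

fun mle :: "'i mlat \<Rightarrow> 'i mlat \<Rightarrow> bool" where
  "mle MBot _ = True"
| "mle _ MTop = True"
| "mle (MAt a) (MAt b) = (a = b)"
| "mle _ _ = False"

definition mjoin :: "'i mlat \<Rightarrow> 'i mlat \<Rightarrow> 'i mlat" where
  "mjoin x y = (if mle x y then y else if mle y x then x else MTop)"

definition mmeet :: "'i mlat \<Rightarrow> 'i mlat \<Rightarrow> 'i mlat" where
  "mmeet x y = (if mle x y then x else if mle y x then y else MBot)"

end

theory Submission
  imports Defs
begin


definition UC :: "('a \<Rightarrow> 'a) set \<Rightarrow> 'a op set" where
  "UC M = {(n, \<lambda>x. u (x k)) | n k u. 1 \<le> n \<and> k < n \<and> u \<in> M}"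

lemma UC_iff: "(n, f) \<in> UC M \<longleftrightarrow> 1 \<le> n \<and> (\<exists>k u. k < n \<and> u \<in> M \<and> f = (\<lambda>x. u (x k)))"
  unfolding UC_def by auto

lemma mem_UC: "u \<in> M \<Longrightarrow> 1 \<le> m \<Longrightarrow> k < m \<Longrightarrow> (m, \<lambda>x. u (x k)) \<in> UC M"
  unfolding UC_iff by blast

lemma UC_cases: "o' \<in> UC M \<Longrightarrow> (\<And>m k u. o' = (m, \<lambda>x. u (x k)) \<Longrightarrow> 1 \<le> m \<Longrightarrow> k < m \<Longrightarrow> u \<in> M \<Longrightarrow> P) \<Longrightarrow> P"
  unfolding UC_def by auto

lemma UC_clone:
  assumes "id \<in> M" "\<And>u v. u \<in> M \<Longrightarrow> v \<in> M \<Longrightarrow> u \<circ> v \<in> M"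
  shows "is_clone (UC M)"
  unfolding is_clone_def
proof (intro conjI allI impI ballI)
  fix o' assume "o' \<in> UC M"
  then show "wf_op o'" by (rule UC_cases) (auto simp: wf_op_def)
next
  fix n k :: nat assume "1 \<le> n" "k < n"
  then show "(n, \<lambda>x. x k) \<in> UC M" using assms(1) unfolding UC_iff
    by (intro conjI exI[of _ k] exI[of _ id]) auto
next
  fix n f m gs assume h: "(n, f) \<in> UC M" "1 \<le> m" "\<forall>i<n. (m, gs i) \<in> UC M"
  from h(1) obtain k u where k: "k < n" "u \<in> M" "f = (\<lambda>x. u (x k))" unfolding UC_iff by blast
  from h(3) k(1) obtain j v where j: "j < m" "v \<in> M" "gs k = (\<lambda>x. v (x j))" unfolding UC_iff by blast
  have "(\<lambda>x. f (\<lambda>i. gs i x)) = (\<lambda>x. (u \<circ> v) (x j))" using k j by auto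
  then show "(m, \<lambda>x. f (\<lambda>i. gs i x)) \<in> UC M" unfolding UC_iff using h(2) j assms(2)[OF k(2) j(2)] by blast
qed

lemma single_coord:
  assumes "\<forall>B. finite B \<longrightarrow> (\<exists>h. (n, h) \<in> UC M \<and> (\<forall>x\<in>B. h x = g x))"
  shows "\<exists>k<n. \<forall>x y. x k = y k \<longrightarrow> g x = g y"
proof (rule ccontr)
  assume "\<not> ?thesis"
  then have "\<forall>k<n. \<exists>x y. x k = y k \<and> g x \<noteq> g y" by blast
  then have "\<forall>k. \<exists>p. k < n \<longrightarrow> fst p k = snd p k \<and> g (fst p) \<noteq> g (snd p)" by force
  then obtain XY where XY0: "\<forall>k. k < n \<longrightarrow> fst (XY k) k = snd (XY k) k \<and> g (fst (XY k)) \<noteq> g (snd (XY k))"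
    using choice[of "\<lambda>k p. k < n \<longrightarrow> fst p k = snd p k \<and> g (fst p) \<noteq> g (snd p)"] by blast
  define X where "X k = fst (XY k)" for k
  define Y where "Y k = snd (XY k)" for k
  have XY: "\<forall>k<n. X k k = Y k k \<and> g (X k) \<noteq> g (Y k)" using XY0 unfolding X_def Y_def by blast
  define B where "B = X ` {..<n} \<union> Y ` {..<n}"
  have "finite B" unfolding B_def by auto
  then obtain h where h: "(n, h) \<in> UC M" "\<forall>x\<in>B. h x = g x" using assms by blast
  then obtain j v where j: "j < n" "h = (\<lambda>x. v (x j))" unfolding UC_iff by blast
  have "X j \<in> B" "Y j \<in> B" using j unfolding B_def by auto
  then have "h (X j) = g (X j)" "h (Y j) = g (Y j)" using h(2) by auto
  moreover have "h (X j) = h (Y j)" using j XY by simp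
  ultimately have "g (X j) = g (Y j)" by simp
  then show False using XY j by blast
qed

definition loc_closed :: "('a \<Rightarrow> 'a) set \<Rightarrow> bool" where
  "loc_closed M \<longleftrightarrow> (\<forall>u. (\<forall>F. finite F \<longrightarrow> (\<exists>v\<in>M. \<forall>a\<in>F. v a = u a)) \<longrightarrow> u \<in> M)"

lemma UC_local:
  assumes "id \<in> M" "\<And>u v. u \<in> M \<Longrightarrow> v \<in> M \<Longrightarrow> u \<circ> v \<in> M" "loc_closed M"
  shows "is_local_clone (UC M)"
  unfolding is_local_clone_def
proof (intro conjI allI impI)
  show "is_clone (UC M)" using UC_clone assms by blast
next
  fix n g assume wf: "wf_op (n, g)" and loc: "\<forall>B. finite B \<longrightarrow> (\<exists>h. (n, h) \<in> UC M \<and> (\<forall>x\<in>B. h x = g x))"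
  from single_coord[OF loc] obtain k where k: "k < n" "\<forall>x y. x k = y k \<longrightarrow> g x = g y" by blast
  define u where "u = (\<lambda>a. g (\<lambda>_. a))"
  have geq: "g = (\<lambda>x. u (x k))"
  proof
    fix x :: "nat \<Rightarrow> 'a"
    show "g x = u (x k)" unfolding u_def using k(2)[rule_format, of x "\<lambda>_. x k"] by simp
  qed
  have "\<forall>F. finite F \<longrightarrow> (\<exists>v\<in>M. \<forall>a\<in>F. v a = u a)"
  proof (intro allI impI)
    fix F :: "'a set" assume "finite F"
    then have "finite ((\<lambda>a. \<lambda>_::nat. a) ` F)" by simp
    then obtain h where h: "(n, h) \<in> UC M" "\<forall>x\<in>(\<lambda>a. \<lambda>_. a) ` F. h x = g x" using loc by blast
    then obtain j v where j: "j < n" "v \<in> M" "h = (\<lambda>x. v (x j))" unfolding UC_iff by blast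
    have "\<forall>a\<in>F. v a = u a"
    proof
      fix a assume "a \<in> F"
      then have "h (\<lambda>_. a) = g (\<lambda>_. a)" using h(2) by blast
      then show "v a = u a" using j(3) unfolding u_def by simp
    qed
    then show "\<exists>v\<in>M. \<forall>a\<in>F. v a = u a" using j(2) by blast
  qed
  then have "u \<in> M" using assms(3) unfolding loc_closed_def by blast
  moreover have "1 \<le> n" using wf unfolding wf_op_def by simp
  ultimately show "(n, g) \<in> UC M" unfolding geq using k(1) by (rule mem_UC)
qed

lemma UC_mono: assumes "M \<subseteq> M'" shows "UC M \<subseteq> UC M'"
proof
  fix o' assume "o' \<in> UC M"
  then obtain m k u where o': "o' = (m, \<lambda>x. u (x k))" "1 \<le> m" "k < m" "u \<in> M" by (rule UC_cases)
  have "u \<in> M'" using o'(4) assms by blast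
  then show "o' \<in> UC M'" unfolding o'(1) using o'(2,3) by (rule mem_UC)
qed

lemma UC_inj: assumes "UC M = UC M'" shows "M = M'"
proof -
  have *: "u \<in> N'" if "UC N = UC N'" "u \<in> N" for u and N N' :: "('a \<Rightarrow> 'a) set"
  proof -
    have "(1, \<lambda>x. u (x 0)) \<in> UC N" unfolding UC_iff using that by blast
    then have "(1, \<lambda>x. u (x 0)) \<in> UC N'" using that by simp
    then obtain k v where kv: "k < 1" "v \<in> N'" "(\<lambda>x::nat\<Rightarrow>'a. u (x 0)) = (\<lambda>x. v (x k))" unfolding UC_iff by blast
    have "u = v"
    proof
      fix a show "u a = v a" using fun_cong[OF kv(3), of "\<lambda>_. a"] by simp
    qed
    then show ?thesis using kv(2) by simp
  qed
  show ?thesis using *[OF assms] *[OF assms[symmetric]] by blast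
qed

lemma UC_Int: "UC M \<inter> UC M' = UC (M \<inter> M')"
proof
  show "UC M \<inter> UC M' \<subseteq> UC (M \<inter> M')"
  proof
    fix o' assume "o' \<in> UC M \<inter> UC M'"
    then obtain n f where o': "o' = (n, f)" "(n, f) \<in> UC M" "(n, f) \<in> UC M'" by (cases o') auto
    then obtain k u where k: "1 \<le> n" "k < n" "u \<in> M" "f = (\<lambda>x. u (x k))" unfolding UC_iff by blast
    from o' obtain j v where j: "j < n" "v \<in> M'" "f = (\<lambda>x. v (x j))" unfolding UC_iff by blast
    have "u = v"
    proof
      fix a show "u a = v a" using fun_cong[OF trans[OF k(4)[symmetric] j(3)], of "\<lambda>_. a"] by simp
    qed
    then show "o' \<in> UC (M \<inter> M')" unfolding o'(1) UC_iff using k j by blast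
  qed
next
  show "UC (M \<inter> M') \<subseteq> UC M \<inter> UC M'" using UC_mono[of "M \<inter> M'" M] UC_mono[of "M \<inter> M'" M'] by blast
qed

lemma loc_join_eq:
  assumes "is_local_clone E" "C \<union> D \<subseteq> E" "\<And>E'. is_local_clone E' \<Longrightarrow> C \<union> D \<subseteq> E' \<Longrightarrow> E \<subseteq> E'"
  shows "loc_join C D = E"
  unfolding loc_join_def using assms by blast

lemma loc_join_le1: "is_local_clone D \<Longrightarrow> C \<subseteq> D \<Longrightarrow> loc_join C D = D"
  by (rule loc_join_eq) auto

lemma loc_join_le2: "is_local_clone C \<Longrightarrow> D \<subseteq> C \<Longrightarrow> loc_join C D = C"
  by (rule loc_join_eq) auto

lemma loc_closed_id: "loc_closed {id}"
  unfolding loc_closed_def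
proof (intro allI impI)
  fix u :: "'a \<Rightarrow> 'a" assume h: "\<forall>F. finite F \<longrightarrow> (\<exists>v\<in>{id}. \<forall>a\<in>F. v a = u a)"
  have "u a = a" for a using h[rule_format, of "{a}"] by auto
  then show "u \<in> {id}" by (auto intro: ext)
qed

lemma loc_closed_UNIV: "loc_closed UNIV"
  unfolding loc_closed_def by blast

lemma loc_closed_End: "loc_closed {u. \<forall>a\<in>S. u a \<in> S}"
  unfolding loc_closed_def
proof (intro allI impI)
  fix u :: "'a \<Rightarrow> 'a" assume h: "\<forall>F. finite F \<longrightarrow> (\<exists>v\<in>{u. \<forall>a\<in>S. u a \<in> S}. \<forall>a\<in>F. v a = u a)"
  have "u a \<in> S" if "a \<in> S" for a using h[rule_format, of "{a}"] that by auto
  then show "u \<in> {u. \<forall>a\<in>S. u a \<in> S}" by auto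
qed

lemma loc_closed_two: "loc_closed {id, w}"
  unfolding loc_closed_def
proof (intro allI impI)
  fix u :: "'a \<Rightarrow> 'a" assume h: "\<forall>F. finite F \<longrightarrow> (\<exists>v\<in>{id, w}. \<forall>a\<in>F. v a = u a)"
  show "u \<in> {id, w}"
  proof (rule ccontr)
    assume "u \<notin> {id, w}"
    then have "u \<noteq> id" "u \<noteq> w" by auto
    then obtain a b where ab: "u a \<noteq> id a" "u b \<noteq> w b" unfolding fun_eq_iff by blast
    obtain v where v: "v \<in> {id, w}" "\<forall>c\<in>{a, b}. v c = u c" using h[rule_format, of "{a, b}"] by blast
    show False
    proof (cases "v = id")
      case True then show False using v(2) ab(1) by simp
    next
      case False then have "v = w" using v(1) by blast
      then show False using v(2) ab(2) by simp
    qed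
  qed
qed


lemma comp_in:
  assumes "is_clone E" "(1, \<lambda>y. g (y 0)) \<in> E" "(m, \<lambda>x. h (x k)) \<in> E" "1 \<le> m"
  shows "(m, \<lambda>x. g (h (x k))) \<in> E"
proof -
  have comp: "\<forall>n f m gs. (n, f) \<in> E \<longrightarrow> 1 \<le> m \<longrightarrow> (\<forall>i<n. (m, gs i) \<in> E) \<longrightarrow>
        (m, \<lambda>x. f (\<lambda>i. gs i x)) \<in> E" using assms(1) unfolding is_clone_def by (elim conjE)
  have c: "(1, \<lambda>y. g (y 0)) \<in> E \<longrightarrow> 1 \<le> m \<longrightarrow> (\<forall>i<(1::nat). (m, (\<lambda>i x. h (x k)) i) \<in> E) \<longrightarrow>
        (m, \<lambda>x. (\<lambda>y. g (y (0::nat))) (\<lambda>i. (\<lambda>i x. h (x k)) i x)) \<in> E"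
    using comp[THEN spec[of _ 1], THEN spec[of _ "\<lambda>y. g (y 0)"], THEN spec[of _ m], THEN spec[of _ "\<lambda>i x. h (x k)"]]
    by assumption
  have "\<forall>i<(1::nat). (m, (\<lambda>i x. h (x k)) i) \<in> E" using assms(3) by simp
  then have "(m, \<lambda>x. (\<lambda>y. g (y (0::nat))) (\<lambda>i. (\<lambda>i x. h (x k)) i x)) \<in> E"
    using c assms(2) assms(4) by blast
  then show ?thesis by simp
qed

lemma join_gen:
  fixes Mg Mh :: "('a \<Rightarrow> 'a) set" and E :: "'a op set"
  assumes "is_local_clone E" "UC Mg \<subseteq> E" "UC Mh \<subseteq> E"
    "\<And>u :: 'a \<Rightarrow> 'a. \<exists>g h. u = g \<circ> h \<and> ((g \<in> Mg \<and> h \<in> Mh) \<or> (g \<in> Mh \<and> h \<in> Mg))"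
  shows "UC UNIV \<subseteq> E"
proof
  fix o' :: "'a op" assume "o' \<in> UC UNIV"
  then obtain m k u where o': "o' = (m, \<lambda>x. u (x k))" "1 \<le> m" "k < m" by (rule UC_cases)
  obtain g h where gh: "u = g \<circ> h" "(g \<in> Mg \<and> h \<in> Mh) \<or> (g \<in> Mh \<and> h \<in> Mg)" using assms(4) by blast
  have cl: "is_clone E" using assms(1) unfolding is_local_clone_def by blast
  have "(1, \<lambda>y. g (y 0)) \<in> UC Mg \<or> (1, \<lambda>y. g (y 0)) \<in> UC Mh"
    using gh(2) mem_UC[of g _ 1 0] by auto
  then have g1: "(1, \<lambda>y. g (y 0)) \<in> E" using assms(2,3) by blast
  have "(m, \<lambda>x. h (x k)) \<in> UC Mg \<or> (m, \<lambda>x. h (x k)) \<in> UC Mh"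
    using gh(2) mem_UC[of h _ m k] o'(2,3) by auto
  then have h1: "(m, \<lambda>x. h (x k)) \<in> E" using assms(2,3) by blast
  from comp_in[OF cl g1 h1 o'(2)] show "o' \<in> E" using o'(1) gh(1) by simp
qed

theorem proposition2p11:
  assumes "countable (UNIV :: 'a set)" and "infinite (UNIV :: 'a set)"
  shows "(\<exists>\<phi> :: nat set mlat \<Rightarrow> 'a op set.
            (\<forall>x. is_local_clone (\<phi> x)) \<and> inj \<phi> \<and>
            (\<forall>x y. mle x y \<longrightarrow> \<phi> x \<subseteq> \<phi> y) \<and>
            (\<forall>x y. \<phi> (mjoin x y) = loc_join (\<phi> x) (\<phi> y)))
       \<and> (\<exists>\<psi> :: nat set mlat \<Rightarrow> 'a op set.
            (\<forall>x. is_local_clone (\<psi> x)) \<and> inj \<psi> \<and>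
            (\<forall>x y. mle x y \<longrightarrow> \<psi> x \<subseteq> \<psi> y) \<and>
            (\<forall>x y. \<psi> (mmeet x y) = loc_meet (\<psi> x) (\<psi> y)))"
proof -
  obtain e :: "nat \<Rightarrow> 'a" where e: "inj e" using infinite_countable_subset[OF assms(2)] by blast
  obtain t :: "'a \<Rightarrow> nat" where t: "inj t" using assms(1) by (blast elim: countableE)
  have ee: "e a = e b \<longleftrightarrow> a = b" for a b using e by (simp add: inj_eq)
  define R where "R A = insert (e 0) (e ` ((\<lambda>n. n+3) ` A))" for A :: "nat set"
  define w where "w A = (\<lambda>x. if x \<in> R A then x else e 0)" for A
  define Mp where "Mp z = (case z of MBot \<Rightarrow> {id} | MTop \<Rightarrow> UNIV | MAt A \<Rightarrow> {id, w A})" for z :: "nat set mlat"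
  have w_idem: "w A \<circ> w A = w A" for A by (auto simp: w_def R_def)
  have w_ne_id: "w A \<noteq> id" for A
  proof
    assume "w A = id"
    then have "w A (e 2) = e 2" by simp
    moreover have "e 2 \<notin> R A" unfolding R_def by (auto simp: ee)
    ultimately show False unfolding w_def by (simp add: ee)
  qed
  have w_inj: "w A \<noteq> w B" if "A \<noteq> B" for A B
  proof -
    have *: "w A \<noteq> w B" if "n \<in> A" "n \<notin> B" for A B n
    proof
      assume "w A = w B"
      then have "w A (e (n+3)) = w B (e (n+3))" by simp
      moreover have "e (n+3) \<in> R A" using that unfolding R_def by auto
      moreover have "e (n+3) \<notin> R B" using that unfolding R_def by (auto simp: ee)
      ultimately show False unfolding w_def by (simp add: ee)
    qed
    from that obtain n where "(n \<in> A \<and> n \<notin> B) \<or> (n \<in> B \<and> n \<notin> A)" by blast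
    then show ?thesis using * by metis
  qed
  have c_notin: "(\<lambda>_. e 1) \<notin> {id, w A}" for A
  proof
    assume "(\<lambda>_. e 1) \<in> {id, w A}"
    then have "(\<lambda>_. e 1) = id \<or> (\<lambda>_. e 1) = w A" by simp
    then have "e 1 = id (e 0) \<or> e 1 = w A (e 0)" by (metis)
    moreover have "w A (e 0) = e 0" by (simp add: w_def R_def)
    ultimately show False by (simp add: ee)
  qed
  have c_notid: "(\<lambda>_. e 1) \<noteq> id" using fun_cong[of "\<lambda>_. e 1" id "e 0"] by (auto simp: ee)
  have Mp_mon: "id \<in> Mp z" "\<And>u v. u \<in> Mp z \<Longrightarrow> v \<in> Mp z \<Longrightarrow> u \<circ> v \<in> Mp z" "loc_closed (Mp z)" for z
    by (cases z; auto simp: Mp_def w_idem loc_closed_id loc_closed_UNIV loc_closed_two)+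
  have f1: "{id} \<noteq> {id, w A}" for A using w_ne_id by (metis insertI1 insert_commute singletonD)
  have f2: "{id, w A} \<noteq> UNIV" for A using c_notin by blast
  have f3: "{id} \<noteq> (UNIV :: ('a \<Rightarrow> 'a) set)" using c_notid by blast
  have f4: "{id, w A} \<noteq> {id, w B}" if "A \<noteq> B" for A B
    using w_inj[OF that] w_ne_id by (metis doubleton_eq_iff)
  have f5: "{id, w A} \<inter> {id, w B} = {id}" if "A \<noteq> B" for A B
    using w_inj[OF that] w_ne_id by auto
  have Mp_inj: "inj Mp"
  proof (rule injI)
    fix x y assume xy: "Mp x = Mp y"
    show "x = y"
    proof (cases x)
      case MBot then show ?thesis using xy f1 f3 by (cases y) (auto simp: Mp_def)
    next
      case MTop then show ?thesis using xy f2 f3 by (cases y) (auto simp: Mp_def)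
    next
      case (MAt A) show ?thesis
      proof (cases y)
        case (MAt B)
        then have "{id, w A} = {id, w B}" using xy \<open>x = MAt A\<close> by (simp add: Mp_def)
        then have "A = B" using f4 by blast
        then show ?thesis using MAt \<open>x = MAt A\<close> by simp
      qed (use xy f1 f2 \<open>x = MAt A\<close> in \<open>auto simp: Mp_def\<close>)
    qed
  qed
  have Mp_mono: "mle x y \<Longrightarrow> Mp x \<subseteq> Mp y" for x y
    by (cases x; cases y; simp add: Mp_def)
  have Mp_meet: "Mp (mmeet x y) = Mp x \<inter> Mp y" for x y
  proof (cases x)
    case MBot then show ?thesis by (cases y) (auto simp: Mp_def mmeet_def)
  next
    case MTop then show ?thesis by (cases y) (auto simp: Mp_def mmeet_def)
  next
    case (MAt A) show ?thesis
    proof (cases y)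
      case (MAt B)
      show ?thesis
      proof (cases "A = B")
        case True then show ?thesis using MAt \<open>x = MAt A\<close> by (simp add: Mp_def mmeet_def)
      next
        case False then show ?thesis using MAt \<open>x = MAt A\<close> f5[OF False] by (simp add: Mp_def mmeet_def)
      qed
    qed (use \<open>x = MAt A\<close> in \<open>auto simp: Mp_def mmeet_def\<close>)
  qed
  have part2: "\<exists>\<psi> :: nat set mlat \<Rightarrow> 'a op set.
            (\<forall>x. is_local_clone (\<psi> x)) \<and> inj \<psi> \<and>
            (\<forall>x y. mle x y \<longrightarrow> \<psi> x \<subseteq> \<psi> y) \<and>
            (\<forall>x y. \<psi> (mmeet x y) = loc_meet (\<psi> x) (\<psi> y))"
  proof (intro exI[of _ "\<lambda>z. UC (Mp z)"] conjI allI impI)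
    fix x show "is_local_clone (UC (Mp x))" by (rule UC_local[OF Mp_mon(1) Mp_mon(2) Mp_mon(3)])
  next
    show "inj (\<lambda>z. UC (Mp z))"
    proof (rule injI)
      fix x y assume "UC (Mp x) = UC (Mp y)"
      then have "Mp x = Mp y" by (rule UC_inj)
      then show "x = y" using Mp_inj by (simp add: inj_eq)
    qed
  next
    fix x y :: "nat set mlat" assume "mle x y"
    then show "UC (Mp x) \<subseteq> UC (Mp y)" by (rule UC_mono[OF Mp_mono])
  next
    fix x y show "UC (Mp (mmeet x y)) = loc_meet (UC (Mp x)) (UC (Mp y))"
      unfolding loc_meet_def UC_Int Mp_meet ..
  qed
  define N where "N A = {k. fst (prod_decode k) \<in> insert 0 ((\<lambda>a. a+2) ` A)}" for A :: "nat set"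
  define S where "S A = e ` N A" for A
  define End where "End A = {u. \<forall>a\<in>S A. u a \<in> S A}" for A
  define Mj where "Mj z = (case z of MBot \<Rightarrow> {id} | MTop \<Rightarrow> UNIV | MAt A \<Rightarrow> End A)" for z :: "nat set mlat"
  define p0 where "p0 = e (prod_encode (0,0))"
  define p1 where "p1 = e (prod_encode (1,0))"
  have p01: "p0 \<noteq> p1" unfolding p0_def p1_def by (auto simp: ee prod_encode_eq)
  have p0S: "p0 \<in> S A" for A unfolding p0_def S_def N_def by auto
  have p1S: "p1 \<notin> S A" for A unfolding p1_def S_def N_def by (auto simp: ee)
  have key: "e (prod_encode (n+2, m)) \<in> S B - S A" if "n \<in> B" "n \<notin> A" for A B n m
    using that unfolding S_def N_def by (auto simp: ee)
  have const_End: "(\<lambda>_. c) \<in> End A \<longleftrightarrow> c \<in> S A" for c A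
    unfolding End_def using p0S by auto
  have S_inj: "S A = S B \<Longrightarrow> A = B" for A B
    using key[of _ A B 0] key[of _ B A 0] by blast
  have End_inj: "End A = End B \<Longrightarrow> A = B" for A B
  proof -
    assume "End A = End B"
    then have "S A = S B" using const_End by blast
    then show "A = B" by (rule S_inj)
  qed
  have End_ne_id: "End A \<noteq> {id}" for A
  proof
    assume "End A = {id}"
    then have "(\<lambda>_. p0) = id" using const_End p0S by blast
    then show False using fun_cong[of "\<lambda>_. p0" id p1] p01 by simp
  qed
  have End_ne_U: "End A \<noteq> UNIV" for A using const_End p1S by blast
  have id_ne_U: "{id} \<noteq> (UNIV :: ('a \<Rightarrow> 'a) set)"
  proof
    assume "{id} = (UNIV :: ('a \<Rightarrow> 'a) set)"
    then have "(\<lambda>_. p0) = id" by (metis UNIV_I singletonD)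
    then show False using fun_cong[of "\<lambda>_. p0" id p1] p01 by simp
  qed
  have gen1: "\<exists>g h. u = g \<circ> h \<and> g \<in> End A \<and> h \<in> End B" if "n \<in> B" "n \<notin> A" for u A B n
  proof -
    define h where "h x = e (prod_encode (n+2, t x))" for x
    have hinj: "inj h" unfolding h_def inj_def using t by (auto simp: ee prod_encode_eq inj_eq)
    have hS: "h x \<in> S B - S A" for x unfolding h_def using key[OF that] by blast
    define g where "g y = (if y \<in> range h then u (inv h y) else y)" for y
    have "u = g \<circ> h" unfolding g_def using hinj by (auto simp: inv_f_f)
    moreover have "g \<in> End A" unfolding End_def g_def using hS by auto
    moreover have "h \<in> End B" unfolding End_def using hS by auto
    ultimately show ?thesis by blast
  qed
  have gen: "\<exists>g h. u = g \<circ> h \<and> ((g \<in> End A \<and> h \<in> End B) \<or> (g \<in> End B \<and> h \<in> End A))"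
    if "A \<noteq> B" for u A B
  proof -
    from that obtain n where "(n \<in> B \<and> n \<notin> A) \<or> (n \<in> A \<and> n \<notin> B)" by blast
    then show ?thesis using gen1 by metis
  qed
  have End_mon: "id \<in> End A" "\<And>u v. u \<in> End A \<Longrightarrow> v \<in> End A \<Longrightarrow> u \<circ> v \<in> End A" "loc_closed (End A)" for A
    unfolding End_def using loc_closed_End by auto
  have Mj_mon: "id \<in> Mj z" "\<And>u v. u \<in> Mj z \<Longrightarrow> v \<in> Mj z \<Longrightarrow> u \<circ> v \<in> Mj z" "loc_closed (Mj z)" for z
    by (cases z; auto simp: Mj_def End_mon loc_closed_id loc_closed_UNIV)+
  have Mj_loc: "is_local_clone (UC (Mj z))" for z by (rule UC_local[OF Mj_mon(1) Mj_mon(2) Mj_mon(3)])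
  have Mj_inj: "inj Mj"
  proof (rule injI)
    fix x y assume "Mj x = Mj y"
    then show "x = y"
      using End_inj End_ne_id End_ne_U id_ne_U
      by (cases x; cases y; auto simp: Mj_def dest: sym)
  qed
  have Mj_mono: "mle x y \<Longrightarrow> Mj x \<subseteq> Mj y" for x y
    using End_mon by (cases x; cases y; auto simp: Mj_def)
  have part1: "\<exists>\<phi> :: nat set mlat \<Rightarrow> 'a op set.
            (\<forall>x. is_local_clone (\<phi> x)) \<and> inj \<phi> \<and>
            (\<forall>x y. mle x y \<longrightarrow> \<phi> x \<subseteq> \<phi> y) \<and>
            (\<forall>x y. \<phi> (mjoin x y) = loc_join (\<phi> x) (\<phi> y))"
  proof (intro exI[of _ "\<lambda>z. UC (Mj z)"] conjI allI impI)
    fix x show "is_local_clone (UC (Mj x))" by (rule Mj_loc)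
  next
    show "inj (\<lambda>z. UC (Mj z))"
    proof (rule injI)
      fix x y assume "UC (Mj x) = UC (Mj y)"
      then have "Mj x = Mj y" by (rule UC_inj)
      then show "x = y" using Mj_inj by (simp add: inj_eq)
    qed
  next
    fix x y :: "nat set mlat" assume "mle x y"
    then show "UC (Mj x) \<subseteq> UC (Mj y)" by (rule UC_mono[OF Mj_mono])
  next
    fix x y :: "nat set mlat"
    show "UC (Mj (mjoin x y)) = loc_join (UC (Mj x)) (UC (Mj y))"
    proof (cases "mle x y")
      case True
      then have "mjoin x y = y" unfolding mjoin_def by simp
      moreover have "UC (Mj x) \<subseteq> UC (Mj y)" by (rule UC_mono[OF Mj_mono[OF True]])
      ultimately show ?thesis using loc_join_le1[OF Mj_loc] by simp
    next
      case F1: False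
      show ?thesis
      proof (cases "mle y x")
        case True
        then have "mjoin x y = x" unfolding mjoin_def using F1 by simp
        moreover have "UC (Mj y) \<subseteq> UC (Mj x)" by (rule UC_mono[OF Mj_mono[OF True]])
        ultimately show ?thesis using loc_join_le2[OF Mj_loc] by simp
      next
        case False
        then obtain A B where AB: "x = MAt A" "y = MAt B" "A \<noteq> B" using F1
          by (cases x; cases y; auto)
        have "mjoin x y = MTop" unfolding mjoin_def using F1 False by simp
        moreover have "loc_join (UC (End A)) (UC (End B)) = UC UNIV"
        proof (rule loc_join_eq)
          show "is_local_clone (UC (UNIV :: ('a \<Rightarrow> 'a) set))" using Mj_loc[of MTop] by (simp add: Mj_def)
          show "UC (End A) \<union> UC (End B) \<subseteq> UC (UNIV :: ('a \<Rightarrow> 'a) set)" using UC_mono by blast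
          fix E' assume "is_local_clone E'" "UC (End A) \<union> UC (End B) \<subseteq> E'"
          then show "UC (UNIV :: ('a \<Rightarrow> 'a) set) \<subseteq> E'" using join_gen[of E' "End A" "End B"] gen[OF AB(3)] by blast
        qed
        ultimately show ?thesis using AB by (simp add: Mj_def)
      qed
    qed
  qed
  show ?thesis using part1 part2 by blast
qed

end
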